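(* Let $G$ be a finite group with subgroups $H_1,H_2$, and let $\Xi$ be a $G$-solitary linear character of $H_1$. There exists a linear character $\chi$ of $H_2$ with $\mathrm{Ind}^G_{H_1}\Xi\cong\mathrm{Ind}^G_{H_2}\chi$ if and only if $H_1$ and $H_2$ are conjugate subgroups of $G$.
   Context: A monomial structure on a representation $\rho\colon G\to\mathrm{Aut}(V)$ is a decomposition $V=\bigoplus_{x\in\Omega}\mathcal L_x$ into one-dimensional subspaces such that $G$ permutes the lines $\mathcal L_x$; the set $\{\mathcal L_x\}$ is then a $G$-set, and an isomorphism of monomial structures is an isomorphism of $G$-sets. A linear character $\Xi$ of $H\le G$ is $G$-solitary if $\mathrm{Ind}^G_H\Xi$ has a unique monomial structure up to isomorphism. *)

theory Defs
  imports "HOL-Algebra.Algebra" Complex_Main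
begin

text \<open>Complex representations are modelled concretely: the representation space is a
set V of functions of type 'g => complex (a complex subspace of the function space,
with pointwise operations), and the action is rho :: 'g => ('g => complex) => ('g => complex).\<close>

definition lin_char :: "('g, 'b) monoid_scheme \<Rightarrow> 'g set \<Rightarrow> ('g \<Rightarrow> complex) \<Rightarrow> bool" where
  "lin_char G H \<xi> \<longleftrightarrow>
     (\<forall>h\<in>H. \<xi> h \<noteq> 0) \<and> (\<forall>h\<in>H. \<forall>k\<in>H. \<xi> (h \<otimes>\<^bsub>G\<^esub> k) = \<xi> h * \<xi> k)"

definition ind_space :: "('g, 'b) monoid_scheme \<Rightarrow> 'g set \<Rightarrow> ('g \<Rightarrow> complex) \<Rightarrow> ('g \<Rightarrow> complex) set" where
  "ind_space G H \<xi> = {f. (\<forall>x. x \<notin> carrier G \<longrightarrow> f x = 0) \<and>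
        (\<forall>h\<in>H. \<forall>x\<in>carrier G. f (h \<otimes>\<^bsub>G\<^esub> x) = \<xi> h * f x)}"

definition ind_act :: "('g, 'b) monoid_scheme \<Rightarrow> 'g \<Rightarrow> ('g \<Rightarrow> complex) \<Rightarrow> ('g \<Rightarrow> complex)" where
  "ind_act G g f = (\<lambda>x. if x \<in> carrier G then f (x \<otimes>\<^bsub>G\<^esub> g) else 0)"

definition lin_on :: "('g \<Rightarrow> complex) set \<Rightarrow> (('g \<Rightarrow> complex) \<Rightarrow> ('h \<Rightarrow> complex)) \<Rightarrow> bool" where
  "lin_on V T \<longleftrightarrow> (\<forall>u\<in>V. \<forall>v\<in>V. \<forall>a b. T (\<lambda>x. a * u x + b * v x) = (\<lambda>y. a * T u y + b * T v y))"

definition rep_iso :: "('g, 'b) monoid_scheme \<Rightarrow> ('x \<Rightarrow> complex) set \<Rightarrow> ('g \<Rightarrow> ('x \<Rightarrow> complex) \<Rightarrow> ('x \<Rightarrow> complex))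
     \<Rightarrow> ('y \<Rightarrow> complex) set \<Rightarrow> ('g \<Rightarrow> ('y \<Rightarrow> complex) \<Rightarrow> ('y \<Rightarrow> complex)) \<Rightarrow> bool" where
  "rep_iso G V1 \<rho>1 V2 \<rho>2 \<longleftrightarrow> (\<exists>T. bij_betw T V1 V2 \<and>
      (\<forall>u\<in>V1. \<forall>v\<in>V1. \<forall>a b. T (\<lambda>x. a * u x + b * v x) = (\<lambda>y. a * T u y + b * T v y)) \<and>
      (\<forall>g\<in>carrier G. \<forall>v\<in>V1. T (\<rho>1 g v) = \<rho>2 g (T v)))"

definition monomial_structure :: "('g, 'b) monoid_scheme \<Rightarrow> ('x \<Rightarrow> complex) set
     \<Rightarrow> ('g \<Rightarrow> ('x \<Rightarrow> complex) \<Rightarrow> ('x \<Rightarrow> complex)) \<Rightarrow> ('x \<Rightarrow> complex) set set \<Rightarrow> bool" where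
  "monomial_structure G V \<rho> \<L> \<longleftrightarrow>
     finite \<L> \<and>
     (\<forall>L\<in>\<L>. \<exists>v\<in>V. v \<noteq> (\<lambda>x. 0) \<and> L = {(\<lambda>x. c * v x) | c. True}) \<and>
     (\<forall>v\<in>V. \<exists>!c. c \<in> (\<Pi>\<^sub>E L\<in>\<L>. L) \<and> v = (\<lambda>x. \<Sum>L\<in>\<L>. c L x)) \<and>
     (\<forall>g\<in>carrier G. \<forall>L\<in>\<L>. \<rho> g ` L \<in> \<L>)"

definition monomial_iso :: "('g, 'b) monoid_scheme \<Rightarrow> ('g \<Rightarrow> ('x \<Rightarrow> complex) \<Rightarrow> ('x \<Rightarrow> complex))
     \<Rightarrow> ('x \<Rightarrow> complex) set set \<Rightarrow> ('x \<Rightarrow> complex) set set \<Rightarrow> bool" where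
  "monomial_iso G \<rho> \<L>1 \<L>2 \<longleftrightarrow> (\<exists>\<phi>. bij_betw \<phi> \<L>1 \<L>2 \<and>
      (\<forall>g\<in>carrier G. \<forall>L\<in>\<L>1. \<phi> (\<rho> g ` L) = \<rho> g ` (\<phi> L)))"

definition G_solitary :: "('g, 'b) monoid_scheme \<Rightarrow> 'g set \<Rightarrow> ('g \<Rightarrow> complex) \<Rightarrow> bool" where
  "G_solitary G H \<xi> \<longleftrightarrow>
     (\<exists>\<L>. monomial_structure G (ind_space G H \<xi>) (ind_act G) \<L>) \<and>
     (\<forall>\<L>1 \<L>2. monomial_structure G (ind_space G H \<xi>) (ind_act G) \<L>1 \<longrightarrow>
               monomial_structure G (ind_space G H \<xi>) (ind_act G) \<L>2 \<longrightarrow>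
               monomial_iso G (ind_act G) \<L>1 \<L>2)"

end

theory Submission
  imports Defs
begin

definition lclosed :: "('x \<Rightarrow> complex) set \<Rightarrow> bool" where
  "lclosed V \<longleftrightarrow> (\<forall>u\<in>V. \<forall>v\<in>V. \<forall>a b. (\<lambda>x. a * u x + b * v x) \<in> V)"

lemma lin_zero:
  fixes V :: "('x \<Rightarrow> complex) set" and T :: "('x \<Rightarrow> complex) \<Rightarrow> ('y \<Rightarrow> complex)"
  assumes lin: "\<forall>u\<in>V. \<forall>v\<in>V. \<forall>a b. T (\<lambda>x. a * u x + b * v x) = (\<lambda>y. a * T u y + b * T v y)"
    and u: "u \<in> V"
  shows "T (\<lambda>x. 0) = (\<lambda>y. 0)"
proof -
  have "T (\<lambda>x. 0 * u x + 0 * u x) = (\<lambda>y. 0 * T u y + 0 * T u y)" using lin u by blast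
  then show ?thesis by simp
qed

lemma lin_smult:
  fixes V :: "('x \<Rightarrow> complex) set" and T :: "('x \<Rightarrow> complex) \<Rightarrow> ('y \<Rightarrow> complex)"
  assumes lin: "\<forall>u\<in>V. \<forall>v\<in>V. \<forall>a b. T (\<lambda>x. a * u x + b * v x) = (\<lambda>y. a * T u y + b * T v y)"
    and u: "u \<in> V"
  shows "T (\<lambda>x. c * u x) = (\<lambda>y. c * T u y)"
proof -
  have "T (\<lambda>x. c * u x + 0 * u x) = (\<lambda>y. c * T u y + 0 * T u y)" using lin u by blast
  then show ?thesis by simp
qed

lemma lclosed_smult: "lclosed V \<Longrightarrow> u \<in> V \<Longrightarrow> (\<lambda>x. c * u x) \<in> V"
proof -
  assume "lclosed V" "u \<in> V"
  then have "(\<lambda>x. c * u x + 0 * u x) \<in> V" unfolding lclosed_def by blast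
  then show ?thesis by simp
qed

lemma lclosed_zero: "lclosed V \<Longrightarrow> u \<in> V \<Longrightarrow> (\<lambda>x. 0) \<in> V"
  using lclosed_smult[of V u 0] by simp

lemma lin_sum:
  fixes V :: "('x \<Rightarrow> complex) set" and T :: "('x \<Rightarrow> complex) \<Rightarrow> ('y \<Rightarrow> complex)"
  assumes cl: "lclosed V" and ne: "u0 \<in> V"
    and lin: "\<forall>u\<in>V. \<forall>v\<in>V. \<forall>a b. T (\<lambda>x. a * u x + b * v x) = (\<lambda>y. a * T u y + b * T v y)"
    and fin: "finite A"
  shows "(\<forall>i\<in>A. f i \<in> V) \<Longrightarrow> (\<lambda>x. \<Sum>i\<in>A. f i x) \<in> V \<and> T (\<lambda>x. \<Sum>i\<in>A. f i x) = (\<lambda>y. \<Sum>i\<in>A. T (f i) y)"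
  using fin
proof (induction A rule: finite_induct)
  case empty
  then show ?case using lclosed_zero[OF cl ne] lin_zero[OF lin ne] by simp
next
  case (insert i A)
  have fi: "f i \<in> V" using insert.prems by simp
  have IH: "(\<lambda>x. \<Sum>i\<in>A. f i x) \<in> V" "T (\<lambda>x. \<Sum>i\<in>A. f i x) = (\<lambda>y. \<Sum>i\<in>A. T (f i) y)"
    using insert.IH insert.prems by auto
  define s where "s = (\<lambda>x. \<Sum>i\<in>A. f i x)"
  have sV: "s \<in> V" and Ts: "T s = (\<lambda>y. \<Sum>i\<in>A. T (f i) y)" using IH unfolding s_def by auto
  have eq: "(\<lambda>x. \<Sum>j\<in>insert i A. f j x) = (\<lambda>x. 1 * f i x + 1 * s x)"
    using insert.hyps unfolding s_def by simp
  have "(\<lambda>x. 1 * f i x + 1 * s x) \<in> V"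
    using cl fi sV unfolding lclosed_def by blast
  moreover have "T (\<lambda>x. 1 * f i x + 1 * s x) = (\<lambda>y. 1 * T (f i) y + 1 * T s y)"
    using lin fi sV by blast
  ultimately show ?case using eq Ts insert.hyps by simp
qed

lemma rep_iso_sym:
  assumes iso: "rep_iso G V1 \<rho>1 V2 \<rho>2" and cl: "lclosed V1"
    and inv: "\<forall>g\<in>carrier G. \<forall>v\<in>V1. \<rho>1 g v \<in> V1"
  shows "rep_iso G V2 \<rho>2 V1 \<rho>1"
proof -
  obtain T where bij: "bij_betw T V1 V2"
    and lin: "\<forall>u\<in>V1. \<forall>v\<in>V1. \<forall>a b. T (\<lambda>x. a * u x + b * v x) = (\<lambda>y. a * T u y + b * T v y)"
    and eqv: "\<forall>g\<in>carrier G. \<forall>v\<in>V1. T (\<rho>1 g v) = \<rho>2 g (T v)"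
    using iso unfolding rep_iso_def by blast
  define S where "S = inv_into V1 T"
  have inj: "inj_on T V1" using bij_betw_imp_inj_on[OF bij] .
  have img: "T ` V1 = V2" using bij_betw_imp_surj_on[OF bij] .
  have bijS: "bij_betw S V2 V1" unfolding S_def using bij by (rule bij_betw_inv_into)
  have SV: "S w \<in> V1" and TS: "T (S w) = w" if "w \<in> V2" for w
    using that img unfolding S_def by (auto simp: inv_into_into f_inv_into_f)
  have ST: "S (T v) = v" if "v \<in> V1" for v
    using that inj unfolding S_def by (simp add: inv_into_f_f)
  have linS: "\<forall>u\<in>V2. \<forall>v\<in>V2. \<forall>a b. S (\<lambda>x. a * u x + b * v x) = (\<lambda>y. a * S u y + b * S v y)"
  proof (intro ballI allI)
    fix u v a b assume u: "u \<in> V2" and v: "v \<in> V2"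
    have m: "(\<lambda>y. a * S u y + b * S v y) \<in> V1" using cl SV[OF u] SV[OF v] unfolding lclosed_def by blast
    have "T (\<lambda>y. a * S u y + b * S v y) = (\<lambda>x. a * u x + b * v x)"
      using lin SV[OF u] SV[OF v] TS[OF u] TS[OF v] by simp
    then show "S (\<lambda>x. a * u x + b * v x) = (\<lambda>y. a * S u y + b * S v y)"
      using ST[OF m] by simp
  qed
  have eqvS: "\<forall>g\<in>carrier G. \<forall>v\<in>V2. S (\<rho>2 g v) = \<rho>1 g (S v)"
  proof (intro ballI)
    fix g v assume g: "g \<in> carrier G" and v: "v \<in> V2"
    have "T (\<rho>1 g (S v)) = \<rho>2 g v" using eqv g SV[OF v] TS[OF v] by metis
    moreover have "\<rho>1 g (S v) \<in> V1" using inv g SV[OF v] by blast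
    ultimately show "S (\<rho>2 g v) = \<rho>1 g (S v)" using ST by metis
  qed
  show ?thesis unfolding rep_iso_def using bijS linS eqvS by blast
qed

lemma transport:
  fixes V :: "('x \<Rightarrow> complex) set" and W :: "('y \<Rightarrow> complex) set"
    and T :: "('x \<Rightarrow> complex) \<Rightarrow> ('y \<Rightarrow> complex)"
  assumes ms: "monomial_structure G V \<rho> \<L>" and cl: "lclosed V" and u0: "u0 \<in> V"
    and bij: "bij_betw T V W"
    and lin: "\<forall>u\<in>V. \<forall>v\<in>V. \<forall>a b. T (\<lambda>x. a * u x + b * v x) = (\<lambda>y. a * T u y + b * T v y)"
    and eqv: "\<forall>g\<in>carrier G. \<forall>v\<in>V. T (\<rho> g v) = \<sigma> g (T v)"
  shows "monomial_structure G W \<sigma> ((\<lambda>L. T ` L) ` \<L>)"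
proof -
  note msd = ms[unfolded monomial_structure_def]
  have fin: "finite \<L>" using msd[THEN conjunct1] .
  have lines: "\<forall>L\<in>\<L>. \<exists>v\<in>V. v \<noteq> (\<lambda>x. 0) \<and> L = {(\<lambda>x. c * v x) | c. True}"
    using msd[THEN conjunct2, THEN conjunct1] .
  have ds: "\<forall>v\<in>V. \<exists>!c. c \<in> (\<Pi>\<^sub>E L\<in>\<L>. L) \<and> v = (\<lambda>x. \<Sum>L\<in>\<L>. c L x)"
    using msd[THEN conjunct2, THEN conjunct2, THEN conjunct1] .
  have perm: "\<forall>g\<in>carrier G. \<forall>L\<in>\<L>. \<rho> g ` L \<in> \<L>"
    using msd[THEN conjunct2, THEN conjunct2, THEN conjunct2] .
  have inj: "inj_on T V" using bij_betw_imp_inj_on[OF bij] .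
  have img: "T ` V = W" using bij_betw_imp_surj_on[OF bij] .
  have Lsub: "L \<subseteq> V" if L: "L \<in> \<L>" for L
  proof -
    obtain v where v: "v \<in> V" and Lv: "L = {(\<lambda>x. c * v x) | c. True}" using lines L by blast
    show ?thesis unfolding Lv using lclosed_smult[OF cl v] by blast
  qed
  have injimg: "inj_on (\<lambda>L. T ` L) \<L>"
  proof (rule inj_onI)
    fix A B assume "A \<in> \<L>" "B \<in> \<L>" "T ` A = T ` B"
    then show "A = B" using inj_on_image_eq_iff[OF inj Lsub Lsub] by simp
  qed
  let ?L' = "(\<lambda>L. T ` L) ` \<L>"
  have lines': "\<forall>L'\<in>?L'. \<exists>w\<in>W. w \<noteq> (\<lambda>x. 0) \<and> L' = {(\<lambda>x. c * w x) | c. True}"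
  proof
    fix L' assume "L' \<in> ?L'"
    then obtain L where L: "L \<in> \<L>" and L': "L' = T ` L" by blast
    obtain v where v: "v \<in> V" and nz: "v \<noteq> (\<lambda>x. 0)" and Lv: "L = {(\<lambda>x. c * v x) | c. True}"
      using lines L by blast
    have Tv: "T v \<in> W" using v img by blast
    have "T v \<noteq> (\<lambda>x. 0)"
    proof
      assume "T v = (\<lambda>x. 0)"
      then have "T v = T (\<lambda>x. 0)" using lin_zero[OF lin v] by simp
      moreover have "(\<lambda>x. 0) \<in> V" using lclosed_zero[OF cl v] .
      ultimately have "v = (\<lambda>x. 0)" using inj v unfolding inj_on_def by blast
      then show False using nz by simp
    qed
    moreover have "T ` L = {(\<lambda>x. c * T v x) | c. True}"
    proof
      show "T ` L \<subseteq> {(\<lambda>x. c * T v x) | c. True}" unfolding Lv using lin_smult[OF lin v] by auto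
      show "{(\<lambda>x. c * T v x) | c. True} \<subseteq> T ` L"
      proof
        fix f assume "f \<in> {(\<lambda>x. c * T v x) | c. True}"
        then obtain c where f: "f = (\<lambda>x. c * T v x)" by blast
        have "(\<lambda>x. c * v x) \<in> L" unfolding Lv by blast
        moreover have "T (\<lambda>x. c * v x) = f" using lin_smult[OF lin v] f by simp
        ultimately show "f \<in> T ` L" by (metis image_eqI)
      qed
    qed
    ultimately show "\<exists>w\<in>W. w \<noteq> (\<lambda>x. 0) \<and> L' = {(\<lambda>x. c * w x) | c. True}"
      using Tv L' by blast
  qed
  have perm': "\<forall>g\<in>carrier G. \<forall>L'\<in>?L'. \<sigma> g ` L' \<in> ?L'"
  proof (intro ballI)
    fix g L' assume g: "g \<in> carrier G" and "L' \<in> ?L'"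
    then obtain L where L: "L \<in> \<L>" and L': "L' = T ` L" by blast
    have "\<sigma> g ` (T ` L) = T ` (\<rho> g ` L)"
      using eqv g Lsub[OF L] by (force simp: image_image)
    moreover have "\<rho> g ` L \<in> \<L>" using perm g L by blast
    ultimately show "\<sigma> g ` L' \<in> ?L'" using L' by simp
  qed
  have ds': "\<exists>!c. c \<in> (\<Pi>\<^sub>E L\<in>?L'. L) \<and> w = (\<lambda>x. \<Sum>L\<in>?L'. c L x)" if w: "w \<in> W" for w
  proof -
    obtain v where v: "v \<in> V" and Tv: "T v = w" using w img by blast
    have sumr: "(\<lambda>x. \<Sum>L'\<in>?L'. d L' x) = (\<lambda>x. \<Sum>L\<in>\<L>. d (T ` L) x)" for d :: "('y \<Rightarrow> complex) set \<Rightarrow> 'y \<Rightarrow> complex"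
    proof
      fix x show "(\<Sum>L'\<in>?L'. d L' x) = (\<Sum>L\<in>\<L>. d (T ` L) x)"
        using sum.reindex[OF injimg, of "\<lambda>L'. d L' x"] by (simp add: comp_def)
    qed
    have linS: "(\<lambda>x. \<Sum>L\<in>\<L>. f L x) \<in> V \<and> T (\<lambda>x. \<Sum>L\<in>\<L>. f L x) = (\<lambda>y. \<Sum>L\<in>\<L>. T (f L) y)"
      if "\<forall>L\<in>\<L>. f L \<in> V" for f
      using lin_sum[OF cl u0 lin fin] that by blast
    have ex1: "\<exists>!c. c \<in> (\<Pi>\<^sub>E L\<in>\<L>. L) \<and> v = (\<lambda>x. \<Sum>L\<in>\<L>. c L x)"
      using ds v by (rule bspec)
    obtain c where cPS: "c \<in> (\<Pi>\<^sub>E L\<in>\<L>. L) \<and> v = (\<lambda>x. \<Sum>L\<in>\<L>. c L x)"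
      and cu: "\<forall>y. y \<in> (\<Pi>\<^sub>E L\<in>\<L>. L) \<and> v = (\<lambda>x. \<Sum>L\<in>\<L>. y L x) \<longrightarrow> y = c"
      using ex1 by (rule ex1E)
    have cP: "c \<in> (\<Pi>\<^sub>E L\<in>\<L>. L)" and cS: "v = (\<lambda>x. \<Sum>L\<in>\<L>. c L x)" using cPS by auto
    define c' where "c' = restrict (\<lambda>L'. T (c (inv_into \<L> (\<lambda>L. T ` L) L'))) ?L'"
    have c'L: "c' (T ` L) = T (c L)" if "L \<in> \<L>" for L
      unfolding c'_def using that injimg by (simp add: inv_into_f_f)
    have c'P: "c' \<in> (\<Pi>\<^sub>E L\<in>?L'. L)"
    proof -
      have "c' L' \<in> L'" if "L' \<in> ?L'" for L'
      proof -
        obtain L where L: "L \<in> \<L>" and L': "L' = T ` L" using \<open>L' \<in> ?L'\<close> by blast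
        have "c L \<in> L" using cP L by (auto simp: PiE_iff)
        then show ?thesis using c'L[OF L] L' by simp
      qed
      then show ?thesis unfolding c'_def by (auto simp: PiE_iff)
    qed
    have cV: "\<forall>L\<in>\<L>. c L \<in> V" using cP Lsub by (auto simp: PiE_iff)
    have c'S: "w = (\<lambda>x. \<Sum>L\<in>?L'. c' L x)"
    proof -
      have "(\<lambda>x. \<Sum>L\<in>?L'. c' L x) = (\<lambda>x. \<Sum>L\<in>\<L>. c' (T ` L) x)" by (rule sumr)
      also have "\<dots> = (\<lambda>x. \<Sum>L\<in>\<L>. T (c L) x)" using c'L by simp
      also have "\<dots> = T v" using linS[OF cV] cS by simp
      finally show ?thesis using Tv by simp
    qed
    have pull: "\<forall>L\<in>\<L>. d (T ` L) = T (c L)"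
      if d: "d \<in> (\<Pi>\<^sub>E L\<in>?L'. L) \<and> w = (\<lambda>x. \<Sum>L\<in>?L'. d L x)" for d
    proof -
      define dd where "dd = restrict (\<lambda>L. inv_into V T (d (T ` L))) \<L>"
      have ddL: "dd L \<in> L \<and> T (dd L) = d (T ` L)" if L: "L \<in> \<L>" for L
      proof -
        have "d (T ` L) \<in> T ` L" using d L by (auto simp: PiE_iff)
        then obtain u where u: "u \<in> L" and du: "d (T ` L) = T u" by blast
        have "dd L = u" unfolding dd_def using L du u Lsub[OF L] inj by (auto simp: inv_into_f_f)
        then show ?thesis using u du by simp
      qed
      have ddP: "dd \<in> (\<Pi>\<^sub>E L\<in>\<L>. L)" using ddL unfolding dd_def by (auto simp: PiE_iff)
      have ddV: "\<forall>L\<in>\<L>. dd L \<in> V" using ddL Lsub by blast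
      have "T (\<lambda>x. \<Sum>L\<in>\<L>. dd L x) = (\<lambda>y. \<Sum>L\<in>\<L>. T (dd L) y)" using linS[OF ddV] by simp
      also have "\<dots> = (\<lambda>y. \<Sum>L\<in>\<L>. d (T ` L) y)" using ddL by simp
      also have "\<dots> = (\<lambda>x. \<Sum>L'\<in>?L'. d L' x)" using sumr by simp
      also have "\<dots> = T v" using d Tv by simp
      finally have "(\<lambda>x. \<Sum>L\<in>\<L>. dd L x) = v"
        using inj_onD[OF inj _ conjunct1[OF linS[OF ddV]] v] by simp
      then have "dd = c" using cu ddP by simp
      then show ?thesis using ddL by simp
    qed
    show ?thesis
    proof (rule ex1I[of _ c'])
      show "c' \<in> (\<Pi>\<^sub>E L\<in>?L'. L) \<and> w = (\<lambda>x. \<Sum>L\<in>?L'. c' L x)" using c'P c'S by simp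
    next
      fix d assume d: "d \<in> (\<Pi>\<^sub>E L\<in>?L'. L) \<and> w = (\<lambda>x. \<Sum>L\<in>?L'. d L x)"
      show "d = c'"
      proof (rule PiE_ext[of _ ?L' "\<lambda>L. L"])
        show "d \<in> (\<Pi>\<^sub>E L\<in>?L'. L)" using d by simp
        show "c' \<in> (\<Pi>\<^sub>E L\<in>?L'. L)" using c'P .
      next
        fix L' assume "L' \<in> ?L'"
        then obtain L where L: "L \<in> \<L>" and L': "L' = T ` L" by blast
        show "d L' = c' L'" using pull[OF d] c'L[OF L] L L' by simp
      qed
    qed
  qed
  show ?thesis unfolding monomial_structure_def using fin lines' perm' ds' by simp
qed

locale indrep = group G for G :: "('g, 'b) monoid_scheme" (structure) +
  fixes H :: "'g set" and \<chi> :: "'g \<Rightarrow> complex"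
  assumes sub: "subgroup H G" and lc: "lin_char G H \<chi>"
begin

abbreviation "V \<equiv> ind_space G H \<chi>"
abbreviation "\<rho> \<equiv> ind_act G"

lemma HG: "h \<in> H \<Longrightarrow> h \<in> carrier G"
  by (rule subgroup.mem_carrier[OF sub])

lemma chi_mult: "h \<in> H \<Longrightarrow> k \<in> H \<Longrightarrow> \<chi> (h \<otimes> k) = \<chi> h * \<chi> k"
  using lc unfolding lin_char_def by auto

lemma chi_nz: "h \<in> H \<Longrightarrow> \<chi> h \<noteq> 0"
  using lc unfolding lin_char_def by auto

lemma chi_one: "\<chi> \<one> = 1"
proof -
  have "\<one> \<in> H" using sub subgroup.one_closed by blast
  then have "\<chi> \<one> = \<chi> \<one> * \<chi> \<one>" using chi_mult[of \<one> \<one>] HG by simp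
  then show ?thesis using chi_nz[OF \<open>\<one> \<in> H\<close>] by simp
qed

lemma mem_rcos: "a \<in> carrier G \<Longrightarrow> x \<in> H #> a \<longleftrightarrow> x \<in> carrier G \<and> x \<otimes> inv a \<in> H"
proof -
  assume a: "a \<in> carrier G"
  have "H \<subseteq> carrier G" by (rule subgroup.subset[OF sub])
  then have "H #> a \<subseteq> carrier G" using r_coset_subset_G a by simp
  then show ?thesis using subgroup.rcos_module[OF sub is_group a, of x] by auto
qed

lemma V_zero_out: "f \<in> V \<Longrightarrow> x \<notin> carrier G \<Longrightarrow> f x = 0"
  unfolding ind_space_def by auto

lemma V_eq: "f \<in> V \<Longrightarrow> h \<in> H \<Longrightarrow> x \<in> carrier G \<Longrightarrow> f (h \<otimes> x) = \<chi> h * f x"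
  unfolding ind_space_def by auto

lemma V_lin: "u \<in> V \<Longrightarrow> v \<in> V \<Longrightarrow> (\<lambda>x. a * u x + b * v x) \<in> V"
  unfolding ind_space_def by (auto simp: algebra_simps)

lemma V_zero: "(\<lambda>x. 0) \<in> V"
  unfolding ind_space_def by auto

lemma V_smult: "v \<in> V \<Longrightarrow> (\<lambda>x. c * v x) \<in> V"
  unfolding ind_space_def by (auto simp: algebra_simps)

lemma rho_V: "g \<in> carrier G \<Longrightarrow> f \<in> V \<Longrightarrow> \<rho> g f \<in> V"
  unfolding ind_space_def ind_act_def using HG by (auto simp: m_assoc)

definition e :: "'g \<Rightarrow> 'g \<Rightarrow> complex" where
  "e y = (\<lambda>x. if x \<in> carrier G \<and> x \<otimes> inv y \<in> H then \<chi> (x \<otimes> inv y) else 0)"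

lemma e_V: "y \<in> carrier G \<Longrightarrow> e y \<in> V"
proof -
  assume y: "y \<in> carrier G"
  have "e y (h \<otimes> x) = \<chi> h * e y x" if h: "h \<in> H" and x: "x \<in> carrier G" for h x
  proof -
    have hG: "h \<in> carrier G" using HG h by auto
    have eq: "h \<otimes> x \<otimes> inv y = h \<otimes> (x \<otimes> inv y)" using hG x y by (simp add: m_assoc)
    have iff: "h \<otimes> (x \<otimes> inv y) \<in> H \<longleftrightarrow> x \<otimes> inv y \<in> H"
    proof
      assume a: "h \<otimes> (x \<otimes> inv y) \<in> H"
      have "inv h \<otimes> (h \<otimes> (x \<otimes> inv y)) \<in> H"
        using subgroup.m_closed[OF sub subgroup.m_inv_closed[OF sub h] a] .
      moreover have "inv h \<otimes> (h \<otimes> (x \<otimes> inv y)) = x \<otimes> inv y"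
        using hG x y by (simp add: m_assoc[symmetric])
      ultimately show "x \<otimes> inv y \<in> H" by simp
    next
      assume "x \<otimes> inv y \<in> H"
      then show "h \<otimes> (x \<otimes> inv y) \<in> H" using subgroup.m_closed[OF sub h] by simp
    qed
    show ?thesis unfolding e_def using eq iff hG x y h chi_mult by auto
  qed
  then show ?thesis unfolding ind_space_def e_def by auto
qed

lemma e_self: "y \<in> carrier G \<Longrightarrow> e y y = 1"
  unfolding e_def using chi_one sub subgroup.one_closed by fastforce

definition Lsp :: "'g set \<Rightarrow> ('g \<Rightarrow> complex) set" where
  "Lsp S = {f \<in> V. \<forall>x. x \<notin> S \<longrightarrow> f x = 0}"

lemma Lsp_line: "y \<in> carrier G \<Longrightarrow> Lsp (H #> y) = {(\<lambda>x. c * e y x) | c. True}"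
proof
  assume y: "y \<in> carrier G"
  show "Lsp (H #> y) \<subseteq> {(\<lambda>x. c * e y x) | c. True}"
  proof
    fix f assume f: "f \<in> Lsp (H #> y)"
    have "f = (\<lambda>x. f y * e y x)"
    proof
      fix x
      show "f x = f y * e y x"
      proof (cases "x \<in> carrier G \<and> x \<otimes> inv y \<in> H")
        case True
        have "x = (x \<otimes> inv y) \<otimes> y" using True y by (simp add: m_assoc)
        then have "f x = \<chi> (x \<otimes> inv y) * f y" using V_eq[of f "x \<otimes> inv y" y] f True y
          unfolding Lsp_def by auto
        then show ?thesis using True unfolding e_def by simp
      next
        case False
        then have "x \<notin> H #> y" using mem_rcos y by blast
        then show ?thesis using f False unfolding Lsp_def e_def by auto
      qed
    qed
    then show "f \<in> {(\<lambda>x. c * e y x) | c. True}" by blast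
  qed
next
  assume y: "y \<in> carrier G"
  show "{(\<lambda>x. c * e y x) | c. True} \<subseteq> Lsp (H #> y)"
    using V_smult[OF e_V[OF y]] mem_rcos[OF y] unfolding Lsp_def e_def by auto
qed

lemma e_Lsp: "y \<in> carrier G \<Longrightarrow> e y \<in> Lsp (H #> y)"
  using Lsp_line[of y] by force

lemma Lsp_sub: "Lsp S \<subseteq> V" unfolding Lsp_def by auto

lemma Lsp_inj: "a \<in> carrier G \<Longrightarrow> b \<in> carrier G \<Longrightarrow> Lsp (H #> a) = Lsp (H #> b) \<Longrightarrow> H #> a = H #> b"
proof -
  assume a: "a \<in> carrier G" and b: "b \<in> carrier G" and eq: "Lsp (H #> a) = Lsp (H #> b)"
  have "e a \<in> Lsp (H #> b)" using e_Lsp[OF a] eq by simp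
  then have "a \<in> H #> b" using e_self[OF a] unfolding Lsp_def by force
  then show ?thesis using repr_independence[OF _ b sub] by simp
qed

lemma rho_Lsp: "g \<in> carrier G \<Longrightarrow> y \<in> carrier G \<Longrightarrow> \<rho> g ` Lsp (H #> y) = Lsp (H #> (y \<otimes> inv g))"
proof -
  have sub1: "\<rho> g ` Lsp (H #> y) \<subseteq> Lsp (H #> (y \<otimes> inv g))"
    if g: "g \<in> carrier G" and y: "y \<in> carrier G" for g y
  proof
    fix f' assume "f' \<in> \<rho> g ` Lsp (H #> y)"
    then obtain f where f: "f \<in> Lsp (H #> y)" and f': "f' = \<rho> g f" by auto
    have "f' x = 0" if x: "x \<notin> H #> (y \<otimes> inv g)" for x
    proof (cases "x \<in> carrier G")
      case True
      have eq: "x \<otimes> g \<otimes> inv y = x \<otimes> inv (y \<otimes> inv g)" using True g y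
        by (simp add: inv_mult_group m_assoc)
      have yg: "y \<otimes> inv g \<in> carrier G" using g y by simp
      have xg: "x \<otimes> g \<in> carrier G" using g True by simp
      have "x \<otimes> inv (y \<otimes> inv g) \<notin> H" using x mem_rcos[OF yg, of x] True by simp
      then have "x \<otimes> g \<notin> H #> y" using mem_rcos[OF y, of "x \<otimes> g"] eq by simp
      then have "f (x \<otimes> g) = 0" using f unfolding Lsp_def by simp
      then show ?thesis using f' True unfolding ind_act_def by simp
    next
      case False
      then show ?thesis using f' unfolding ind_act_def by simp
    qed
    moreover have "f' \<in> V" using rho_V[OF g] f f' Lsp_sub by blast
    ultimately show "f' \<in> Lsp (H #> (y \<otimes> inv g))" unfolding Lsp_def by simp
  qed
  assume g: "g \<in> carrier G" and y: "y \<in> carrier G"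
  show ?thesis
  proof
    show "\<rho> g ` Lsp (H #> y) \<subseteq> Lsp (H #> (y \<otimes> inv g))" using sub1 g y .
  next
    show "Lsp (H #> (y \<otimes> inv g)) \<subseteq> \<rho> g ` Lsp (H #> y)"
    proof
      fix f assume f: "f \<in> Lsp (H #> (y \<otimes> inv g))"
      have "\<rho> (inv g) f \<in> Lsp (H #> (y \<otimes> inv g \<otimes> inv (inv g)))"
        using sub1[of "inv g" "y \<otimes> inv g"] f g y by auto
      moreover have "y \<otimes> inv g \<otimes> inv (inv g) = y" using g y by (simp add: m_assoc)
      moreover have "\<rho> g (\<rho> (inv g) f) = f"
      proof
        fix x
        have fV: "f \<in> V" using f Lsp_sub by blast
        show "\<rho> g (\<rho> (inv g) f) x = f x"
          using g V_zero_out[OF fV, of x] unfolding ind_act_def by (auto simp: m_assoc)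
      qed
      ultimately show "f \<in> \<rho> g ` Lsp (H #> y)" by (metis image_eqI)
    qed
  qed
qed

lemma stab: "g \<in> carrier G \<Longrightarrow> y \<in> carrier G \<Longrightarrow>
   \<rho> g ` Lsp (H #> y) = Lsp (H #> y) \<longleftrightarrow> y \<otimes> inv g \<otimes> inv y \<in> H"
proof -
  assume g: "g \<in> carrier G" and y: "y \<in> carrier G"
  have "\<rho> g ` Lsp (H #> y) = Lsp (H #> y) \<longleftrightarrow> H #> (y \<otimes> inv g) = H #> y"
    using rho_Lsp[OF g y] Lsp_inj[of "y \<otimes> inv g" y] g y by auto
  also have "\<dots> \<longleftrightarrow> y \<otimes> inv g \<in> H #> y"
    using repr_independence[OF _ y sub] rcos_self[of "y \<otimes> inv g" H] sub g y by auto
  also have "\<dots> \<longleftrightarrow> y \<otimes> inv g \<otimes> inv y \<in> H" using mem_rcos[OF y] g y by auto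
  finally show ?thesis .
qed

definition "LL = (\<lambda>y. Lsp (H #> y)) ` carrier G"


lemma LL_sub: "L \<in> LL \<Longrightarrow> L \<subseteq> V" unfolding LL_def using Lsp_sub by auto

lemma key: "x \<in> carrier G \<Longrightarrow> L \<in> LL \<Longrightarrow> L \<noteq> Lsp (H #> x) \<Longrightarrow> f \<in> L \<Longrightarrow> f x = 0"
proof -
  assume x: "x \<in> carrier G" and L: "L \<in> LL" and ne: "L \<noteq> Lsp (H #> x)" and f: "f \<in> L"
  obtain y where y: "y \<in> carrier G" and Ly: "L = Lsp (H #> y)" using L unfolding LL_def by auto
  have "x \<notin> H #> y"
  proof
    assume "x \<in> H #> y"
    then have "H #> y = H #> x" using repr_independence[OF _ y sub] by simp
    then show False using ne Ly by simp
  qed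
  then show ?thesis using f Ly unfolding Lsp_def by simp
qed

lemma sum_eval:
  assumes fin: "finite LL" and c: "c \<in> (\<Pi>\<^sub>E L\<in>LL. L)"
  shows "(\<Sum>L\<in>LL. c L x) = (if x \<in> carrier G then c (Lsp (H #> x)) x else 0)"
proof (cases "x \<in> carrier G")
  case True
  have mem: "Lsp (H #> x) \<in> LL" using True unfolding LL_def by simp
  have "(\<Sum>L\<in>LL. c L x) = c (Lsp (H #> x)) x + (\<Sum>L\<in>LL - {Lsp (H #> x)}. c L x)"
    by (rule sum.remove[OF fin mem])
  moreover have "(\<Sum>L\<in>LL - {Lsp (H #> x)}. c L x) = 0"
  proof (rule sum.neutral, rule ballI)
    fix L assume L: "L \<in> LL - {Lsp (H #> x)}"
    have "c L \<in> L" using c L by (auto simp: PiE_iff)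
    then show "c L x = 0" using key[OF True] L by auto
  qed
  ultimately show ?thesis using True by simp
next
  case False
  have "c L x = 0" if "L \<in> LL" for L
    using c that LL_sub[OF that] V_zero_out[OF _ False] by (auto simp: PiE_iff)
  then show ?thesis using False by simp
qed


lemma coset_h: "h \<in> H \<Longrightarrow> x \<in> carrier G \<Longrightarrow> H #> (h \<otimes> x) = H #> x"
proof -
  assume h: "h \<in> H" and x: "x \<in> carrier G"
  have hG: "h \<in> carrier G" using HG h .
  have "h \<otimes> x \<otimes> inv x = h" using hG x by (simp add: m_assoc)
  then have "h \<otimes> x \<in> H #> x" using mem_rcos[OF x, of "h \<otimes> x"] h hG x by simp
  then show ?thesis using repr_independence[OF _ x sub] by simp
qed

lemma std_ms: assumes fin: "finite (carrier G)" shows "monomial_structure G V \<rho> LL"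
proof -
  have finLL: "finite LL" unfolding LL_def using fin by simp
  have lines: "\<forall>L\<in>LL. \<exists>v\<in>V. v \<noteq> (\<lambda>x. 0) \<and> L = {(\<lambda>x. c * v x) | c. True}"
  proof
    fix L assume "L \<in> LL"
    then obtain y where y: "y \<in> carrier G" and Ly: "L = Lsp (H #> y)" unfolding LL_def by auto
    have "e y \<noteq> (\<lambda>x. 0)" using e_self[OF y] by (metis zero_neq_one)
    then show "\<exists>v\<in>V. v \<noteq> (\<lambda>x. 0) \<and> L = {(\<lambda>x. c * v x) | c. True}"
      using e_V[OF y] Lsp_line[OF y] Ly by blast
  qed
  have perm: "\<forall>g\<in>carrier G. \<forall>L\<in>LL. \<rho> g ` L \<in> LL"
  proof (intro ballI)
    fix g L assume g: "g \<in> carrier G" and "L \<in> LL"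
    then obtain y where y: "y \<in> carrier G" and Ly: "L = Lsp (H #> y)" unfolding LL_def by auto
    show "\<rho> g ` L \<in> LL" using rho_Lsp[OF g y] Ly g y unfolding LL_def by simp
  qed
  have ds: "\<exists>!c. c \<in> (\<Pi>\<^sub>E L\<in>LL. L) \<and> v = (\<lambda>x. \<Sum>L\<in>LL. c L x)" if v: "v \<in> V" for v
  proof -
    define c0 where "c0 = restrict (\<lambda>L. \<lambda>x. if x \<in> carrier G \<and> L = Lsp (H #> x) then v x else 0) LL"
    have c0P: "c0 \<in> (\<Pi>\<^sub>E L\<in>LL. L)"
    proof -
      have "c0 L \<in> L" if L: "L \<in> LL" for L
      proof -
        obtain y where y: "y \<in> carrier G" and Ly: "L = Lsp (H #> y)" using L unfolding LL_def by auto
        have c0L: "c0 L = (\<lambda>x. if x \<in> carrier G \<and> L = Lsp (H #> x) then v x else 0)"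
          using L unfolding c0_def by simp
        have inV: "c0 L \<in> V"
          unfolding ind_space_def
        proof (intro CollectI conjI allI impI ballI)
          fix x assume "x \<notin> carrier G" then show "c0 L x = 0" using c0L by simp
        next
          fix h x assume h: "h \<in> H" and x: "x \<in> carrier G"
          have hx: "h \<otimes> x \<in> carrier G" using HG[OF h] x by simp
          show "c0 L (h \<otimes> x) = \<chi> h * c0 L x"
            using c0L coset_h[OF h x] hx x V_eq[OF v h x] by simp
        qed
        have "c0 L x = 0" if x: "x \<notin> H #> y" for x
        proof (cases "x \<in> carrier G \<and> L = Lsp (H #> x)")
          case True
          then have "H #> y = H #> x" using Lsp_inj[OF y, of x] Ly by simp
          then have "x \<in> H #> y" using rcos_self[of x H] True sub by simp
          then show ?thesis using x by simp
        next
          case False then show ?thesis using c0L by auto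
        qed
        then show ?thesis using inV Ly unfolding Lsp_def by simp
      qed
      then show ?thesis unfolding c0_def by (auto simp: PiE_iff)
    qed
    have c0S: "v = (\<lambda>x. \<Sum>L\<in>LL. c0 L x)"
    proof
      fix x
      show "v x = (\<Sum>L\<in>LL. c0 L x)"
      proof (cases "x \<in> carrier G")
        case True
        have "Lsp (H #> x) \<in> LL" using True unfolding LL_def by simp
        then show ?thesis using sum_eval[OF finLL c0P, of x] True unfolding c0_def by simp
      next
        case False
        then show ?thesis using sum_eval[OF finLL c0P, of x] V_zero_out[OF v False] by simp
      qed
    qed
    show ?thesis
    proof (rule ex1I[of _ c0])
      show "c0 \<in> (\<Pi>\<^sub>E L\<in>LL. L) \<and> v = (\<lambda>x. \<Sum>L\<in>LL. c0 L x)" using c0P c0S by simp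
    next
      fix c assume c: "c \<in> (\<Pi>\<^sub>E L\<in>LL. L) \<and> v = (\<lambda>x. \<Sum>L\<in>LL. c L x)"
      show "c = c0"
      proof (rule PiE_ext[of _ LL "\<lambda>L. L"])
        show "c \<in> (\<Pi>\<^sub>E L\<in>LL. L)" using c by simp
        show "c0 \<in> (\<Pi>\<^sub>E L\<in>LL. L)" using c0P .
      next
        fix L assume L: "L \<in> LL"
        have cL: "c L \<in> L" using c L by (auto simp: PiE_iff)
        have c0L: "c0 L \<in> L" using c0P L by (auto simp: PiE_iff)
        show "c L = c0 L"
        proof
          fix x
          show "c L x = c0 L x"
          proof (cases "x \<in> carrier G")
            case False
            have "c L x = 0" using V_zero_out[OF subsetD[OF LL_sub[OF L] cL] False] .
            moreover have "c0 L x = 0" using V_zero_out[OF subsetD[OF LL_sub[OF L] c0L] False] .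
            ultimately show ?thesis by simp
          next
            case True
            show ?thesis
            proof (cases "L = Lsp (H #> x)")
              case True2: True
              have cP: "c \<in> (\<Pi>\<^sub>E L\<in>LL. L)" using c by simp
              have "v x = (\<Sum>L\<in>LL. c L x)" using c by (simp add: fun_eq_iff)
              also have "\<dots> = c L x" using sum_eval[OF finLL cP, of x] True True2 by simp
              finally have 1: "v x = c L x" .
              have "v x = (\<Sum>L\<in>LL. c0 L x)" using c0S by (simp add: fun_eq_iff)
              also have "\<dots> = c0 L x" using sum_eval[OF finLL c0P, of x] True True2 by simp
              finally have 2: "v x = c0 L x" .
              show ?thesis using 1 2 by simp
            next
              case False
              then show ?thesis using key[OF True L False cL] key[OF True L False c0L] by simp
            qed
          qed
        qed
      qed
    qed
  qed
  show ?thesis unfolding monomial_structure_def using finLL lines perm ds by simp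
qed

end

lemma (in group) inv_cancel_left1 [simp]: "x \<in> carrier G \<Longrightarrow> y \<in> carrier G \<Longrightarrow> inv x \<otimes> (x \<otimes> y) = y"
  by (simp add: m_assoc[symmetric])

lemma (in group) inv_cancel_left2 [simp]: "x \<in> carrier G \<Longrightarrow> y \<in> carrier G \<Longrightarrow> x \<otimes> (inv x \<otimes> y) = y"
  by (simp add: m_assoc[symmetric])

lemma (in group) conj_back: "g \<in> carrier G \<Longrightarrow> h \<in> carrier G \<Longrightarrow> g \<otimes> (inv g \<otimes> h \<otimes> g) \<otimes> inv g = h"
  apply (simp add: m_assoc[symmetric]) by (simp add: m_assoc)

lemma (in group) conj_back2: "g \<in> carrier G \<Longrightarrow> h \<in> carrier G \<Longrightarrow> inv g \<otimes> (g \<otimes> h \<otimes> inv g) \<otimes> g = h"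
  apply (simp add: m_assoc[symmetric]) by (simp add: m_assoc)

lemma (in group) conj_inv_h: "g \<in> carrier G \<Longrightarrow> h \<in> carrier G \<Longrightarrow> inv (inv g \<otimes> h \<otimes> g) = inv g \<otimes> inv h \<otimes> g"
  by (simp add: inv_mult_group m_assoc)

theorem lemma4p4:
  fixes G :: "('g, 'b) monoid_scheme" and H1 H2 :: "'g set" and \<Xi> :: "'g \<Rightarrow> complex"
  assumes "group G" and "finite (carrier G)"
    and "subgroup H1 G" and "subgroup H2 G"
    and "lin_char G H1 \<Xi>" and "G_solitary G H1 \<Xi>"
  shows "(\<exists>\<chi>. lin_char G H2 \<chi> \<and>
            rep_iso G (ind_space G H1 \<Xi>) (ind_act G) (ind_space G H2 \<chi>) (ind_act G))
         \<longleftrightarrow> (\<exists>g\<in>carrier G. H2 = (\<lambda>h. inv\<^bsub>G\<^esub> g \<otimes>\<^bsub>G\<^esub> h \<otimes>\<^bsub>G\<^esub> g) ` H1)"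
proof
  interpret I1: indrep G H1 \<Xi> using assms by (simp add: indrep_def indrep_axioms_def)
  assume "\<exists>\<chi>. lin_char G H2 \<chi> \<and>
            rep_iso G (ind_space G H1 \<Xi>) (ind_act G) (ind_space G H2 \<chi>) (ind_act G)"
  then obtain \<chi> where lc2: "lin_char G H2 \<chi>"
    and iso: "rep_iso G (ind_space G H1 \<Xi>) (ind_act G) (ind_space G H2 \<chi>) (ind_act G)" by blast
  interpret I2: indrep G H2 \<chi> using assms lc2 by (simp add: indrep_def indrep_axioms_def)
  have cl1: "lclosed I1.V" unfolding lclosed_def using I1.V_lin by blast
  have cl2: "lclosed I2.V" unfolding lclosed_def using I2.V_lin by blast
  have iso2: "rep_iso G I2.V I2.\<rho> I1.V I1.\<rho>"
    using rep_iso_sym[OF iso cl1] I1.rho_V by blast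
  then obtain S where bijS: "bij_betw S I2.V I1.V"
    and linS: "\<forall>u\<in>I2.V. \<forall>v\<in>I2.V. \<forall>a b. S (\<lambda>x. a * u x + b * v x) = (\<lambda>y. a * S u y + b * S v y)"
    and eqvS: "\<forall>g\<in>carrier G. \<forall>v\<in>I2.V. S (I2.\<rho> g v) = I1.\<rho> g (S v)"
    unfolding rep_iso_def by blast
  have injS: "inj_on S I2.V" using bij_betw_imp_inj_on[OF bijS] .
  define LL2 where "LL2 = (\<lambda>L. S ` L) ` I2.LL"
  have ms2: "monomial_structure G I1.V I1.\<rho> LL2"
    unfolding LL2_def by (rule transport[OF I2.std_ms[OF assms(2)] cl2 I2.V_zero bijS linS eqvS])
  have ms1: "monomial_structure G I1.V I1.\<rho> I1.LL" using I1.std_ms[OF assms(2)] .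
  have "monomial_iso G I1.\<rho> I1.LL LL2"
    using assms(6) ms1 ms2 unfolding G_solitary_def by blast
  then obtain \<phi> where bij\<phi>: "bij_betw \<phi> I1.LL LL2"
    and eqv\<phi>: "\<forall>g\<in>carrier G. \<forall>L\<in>I1.LL. \<phi> (I1.\<rho> g ` L) = I1.\<rho> g ` (\<phi> L)"
    unfolding monomial_iso_def by blast
  have one: "\<one>\<^bsub>G\<^esub> \<in> carrier G" by simp
  define L1 where "L1 = I1.Lsp (H1 #>\<^bsub>G\<^esub> \<one>\<^bsub>G\<^esub>)"
  have L1in: "L1 \<in> I1.LL" unfolding L1_def I1.LL_def by (rule imageI[OF one])
  have "\<phi> L1 \<in> LL2" using bij_betw_apply[OF bij\<phi> L1in] .
  then obtain L2 where L2: "L2 \<in> I2.LL" and \<phi>L2: "\<phi> L1 = S ` L2"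
    unfolding LL2_def by (rule imageE)
  then obtain y where y: "y \<in> carrier G" and \<phi>L1: "\<phi> L1 = S ` I2.Lsp (H2 #>\<^bsub>G\<^esub> y)"
    unfolding I2.LL_def by auto
  have perm1: "I1.\<rho> g ` L1 \<in> I1.LL" if g: "g \<in> carrier G" for g
    using ms1[unfolded monomial_structure_def, THEN conjunct2, THEN conjunct2, THEN conjunct2] g L1in
    by simp
  have key: "g \<in> H1 \<longleftrightarrow> y \<otimes>\<^bsub>G\<^esub> inv\<^bsub>G\<^esub> g \<otimes>\<^bsub>G\<^esub> inv\<^bsub>G\<^esub> y \<in> H2" if g: "g \<in> carrier G" for g
  proof -
    have "g \<in> H1 \<longleftrightarrow> \<one>\<^bsub>G\<^esub> \<otimes>\<^bsub>G\<^esub> inv\<^bsub>G\<^esub> g \<otimes>\<^bsub>G\<^esub> inv\<^bsub>G\<^esub> \<one>\<^bsub>G\<^esub> \<in> H1"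
    proof -
      have "\<one>\<^bsub>G\<^esub> \<otimes>\<^bsub>G\<^esub> inv\<^bsub>G\<^esub> g \<otimes>\<^bsub>G\<^esub> inv\<^bsub>G\<^esub> \<one>\<^bsub>G\<^esub> = inv\<^bsub>G\<^esub> g" using g by simp
      moreover have "inv\<^bsub>G\<^esub> g \<in> H1 \<longleftrightarrow> g \<in> H1"
        using g assms(3) subgroup.m_inv_closed[OF assms(3)] by (metis I1.inv_inv)
      ultimately show ?thesis by simp
    qed
    also have "\<dots> \<longleftrightarrow> I1.\<rho> g ` L1 = L1" unfolding L1_def using I1.stab[OF g one] by simp
    also have "\<dots> \<longleftrightarrow> I1.\<rho> g ` (\<phi> L1) = \<phi> L1"
    proof
      assume "I1.\<rho> g ` L1 = L1"
      then show "I1.\<rho> g ` (\<phi> L1) = \<phi> L1" using eqv\<phi> g L1in by metis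
    next
      assume a: "I1.\<rho> g ` (\<phi> L1) = \<phi> L1"
      have "\<phi> (I1.\<rho> g ` L1) = \<phi> L1" using eqv\<phi> g L1in a by metis
      then show "I1.\<rho> g ` L1 = L1"
        using bij_betw_imp_inj_on[OF bij\<phi>] perm1[OF g] L1in unfolding inj_on_def by blast
    qed
    also have "\<dots> \<longleftrightarrow> S ` (I2.\<rho> g ` I2.Lsp (H2 #>\<^bsub>G\<^esub> y)) = S ` I2.Lsp (H2 #>\<^bsub>G\<^esub> y)"
    proof -
      have "I1.\<rho> g ` (S ` I2.Lsp (H2 #>\<^bsub>G\<^esub> y)) = S ` (I2.\<rho> g ` I2.Lsp (H2 #>\<^bsub>G\<^esub> y))"
        using eqvS g I2.Lsp_sub by (force simp: image_image)
      then show ?thesis using \<phi>L1 by simp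
    qed
    also have "\<dots> \<longleftrightarrow> I2.\<rho> g ` I2.Lsp (H2 #>\<^bsub>G\<^esub> y) = I2.Lsp (H2 #>\<^bsub>G\<^esub> y)"
    proof (rule inj_on_image_eq_iff[OF injS])
      show "I2.\<rho> g ` I2.Lsp (H2 #>\<^bsub>G\<^esub> y) \<subseteq> I2.V" using I2.rho_Lsp[OF g y] I2.Lsp_sub by simp
      show "I2.Lsp (H2 #>\<^bsub>G\<^esub> y) \<subseteq> I2.V" using I2.Lsp_sub .
    qed
    also have "\<dots> \<longleftrightarrow> y \<otimes>\<^bsub>G\<^esub> inv\<^bsub>G\<^esub> g \<otimes>\<^bsub>G\<^esub> inv\<^bsub>G\<^esub> y \<in> H2" using I2.stab[OF g y] .
    finally show ?thesis .
  qed
  have iy: "inv\<^bsub>G\<^esub> y \<in> carrier G" using y by simp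
  have "H2 = (\<lambda>h. inv\<^bsub>G\<^esub> (inv\<^bsub>G\<^esub> y) \<otimes>\<^bsub>G\<^esub> h \<otimes>\<^bsub>G\<^esub> inv\<^bsub>G\<^esub> y) ` H1"
  proof
    show "H2 \<subseteq> (\<lambda>h. inv\<^bsub>G\<^esub> (inv\<^bsub>G\<^esub> y) \<otimes>\<^bsub>G\<^esub> h \<otimes>\<^bsub>G\<^esub> inv\<^bsub>G\<^esub> y) ` H1"
    proof
      fix k assume k: "k \<in> H2"
      have kG: "k \<in> carrier G" using I2.HG[OF k] .
      define h where "h = inv\<^bsub>G\<^esub> y \<otimes>\<^bsub>G\<^esub> k \<otimes>\<^bsub>G\<^esub> y"
      have hG: "h \<in> carrier G" unfolding h_def using kG y by simp
      have "y \<otimes>\<^bsub>G\<^esub> inv\<^bsub>G\<^esub> h \<otimes>\<^bsub>G\<^esub> inv\<^bsub>G\<^esub> y = inv\<^bsub>G\<^esub> k"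
      proof -
        have "inv\<^bsub>G\<^esub> h = inv\<^bsub>G\<^esub> y \<otimes>\<^bsub>G\<^esub> inv\<^bsub>G\<^esub> k \<otimes>\<^bsub>G\<^esub> y"
          unfolding h_def using I1.conj_inv_h[OF y kG] .
        then show ?thesis using I1.conj_back[OF y, of "inv\<^bsub>G\<^esub> k"] kG by simp
      qed
      then have "h \<in> H1" using key[OF hG] subgroup.m_inv_closed[OF assms(4) k] by simp
      moreover have "k = inv\<^bsub>G\<^esub> (inv\<^bsub>G\<^esub> y) \<otimes>\<^bsub>G\<^esub> h \<otimes>\<^bsub>G\<^esub> inv\<^bsub>G\<^esub> y"
        unfolding h_def by (simp only: I1.inv_inv[OF y] I1.conj_back[OF y kG])
      ultimately show "k \<in> (\<lambda>h. inv\<^bsub>G\<^esub> (inv\<^bsub>G\<^esub> y) \<otimes>\<^bsub>G\<^esub> h \<otimes>\<^bsub>G\<^esub> inv\<^bsub>G\<^esub> y) ` H1" by blast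
    qed
  next
    show "(\<lambda>h. inv\<^bsub>G\<^esub> (inv\<^bsub>G\<^esub> y) \<otimes>\<^bsub>G\<^esub> h \<otimes>\<^bsub>G\<^esub> inv\<^bsub>G\<^esub> y) ` H1 \<subseteq> H2"
    proof
      fix k assume "k \<in> (\<lambda>h. inv\<^bsub>G\<^esub> (inv\<^bsub>G\<^esub> y) \<otimes>\<^bsub>G\<^esub> h \<otimes>\<^bsub>G\<^esub> inv\<^bsub>G\<^esub> y) ` H1"
      then obtain h where h: "h \<in> H1" and k: "k = inv\<^bsub>G\<^esub> (inv\<^bsub>G\<^esub> y) \<otimes>\<^bsub>G\<^esub> h \<otimes>\<^bsub>G\<^esub> inv\<^bsub>G\<^esub> y" by blast
      have hG: "h \<in> carrier G" using I1.HG[OF h] .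
      have ih: "inv\<^bsub>G\<^esub> h \<in> H1" using subgroup.m_inv_closed[OF assms(3) h] .
      have "y \<otimes>\<^bsub>G\<^esub> inv\<^bsub>G\<^esub> (inv\<^bsub>G\<^esub> h) \<otimes>\<^bsub>G\<^esub> inv\<^bsub>G\<^esub> y \<in> H2"
        using key[of "inv\<^bsub>G\<^esub> h"] ih hG by simp
      then show "k \<in> H2" using k hG y by simp
    qed
  qed
  then show "\<exists>g\<in>carrier G. H2 = (\<lambda>h. inv\<^bsub>G\<^esub> g \<otimes>\<^bsub>G\<^esub> h \<otimes>\<^bsub>G\<^esub> g) ` H1" using iy by blast
next
  interpret I1: indrep G H1 \<Xi> using assms by (simp add: indrep_def indrep_axioms_def)
  assume "\<exists>g\<in>carrier G. H2 = (\<lambda>h. inv\<^bsub>G\<^esub> g \<otimes>\<^bsub>G\<^esub> h \<otimes>\<^bsub>G\<^esub> g) ` H1"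
  then obtain g where g: "g \<in> carrier G" and H2: "H2 = (\<lambda>h. inv\<^bsub>G\<^esub> g \<otimes>\<^bsub>G\<^esub> h \<otimes>\<^bsub>G\<^esub> g) ` H1" by blast
  define \<chi> where "\<chi> = (\<lambda>h. \<Xi> (g \<otimes>\<^bsub>G\<^esub> h \<otimes>\<^bsub>G\<^esub> inv\<^bsub>G\<^esub> g))"
  have cj: "g \<otimes>\<^bsub>G\<^esub> h \<otimes>\<^bsub>G\<^esub> inv\<^bsub>G\<^esub> g \<in> H1" if "h \<in> H2" for h
  proof -
    obtain h1 where h1: "h1 \<in> H1" and h: "h = inv\<^bsub>G\<^esub> g \<otimes>\<^bsub>G\<^esub> h1 \<otimes>\<^bsub>G\<^esub> g" using \<open>h \<in> H2\<close> H2 by blast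
    show ?thesis using h h1 I1.conj_back[OF g I1.HG[OF h1]] I1.m_assoc by simp
  qed
  have H2G: "h \<in> carrier G" if "h \<in> H2" for h
    using subgroup.mem_carrier[OF assms(4) that] .
  have lc2: "lin_char G H2 \<chi>"
    unfolding lin_char_def
  proof (intro conjI ballI)
    fix h assume "h \<in> H2"
    then show "\<chi> h \<noteq> 0" unfolding \<chi>_def using I1.chi_nz cj by blast
  next
    fix h k assume h: "h \<in> H2" and k: "k \<in> H2"
    have "g \<otimes>\<^bsub>G\<^esub> (h \<otimes>\<^bsub>G\<^esub> k) \<otimes>\<^bsub>G\<^esub> inv\<^bsub>G\<^esub> g
        = (g \<otimes>\<^bsub>G\<^esub> h \<otimes>\<^bsub>G\<^esub> inv\<^bsub>G\<^esub> g) \<otimes>\<^bsub>G\<^esub> (g \<otimes>\<^bsub>G\<^esub> k \<otimes>\<^bsub>G\<^esub> inv\<^bsub>G\<^esub> g)"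
      using g H2G[OF h] H2G[OF k] by (simp add: I1.m_assoc)
    then show "\<chi> (h \<otimes>\<^bsub>G\<^esub> k) = \<chi> h * \<chi> k" unfolding \<chi>_def using I1.chi_mult[OF cj[OF h] cj[OF k]] by simp
  qed
  interpret I2: indrep G H2 \<chi> using assms lc2 by (simp add: indrep_def indrep_axioms_def)
  define T where "T = (\<lambda>f::'g \<Rightarrow> complex. \<lambda>x. if x \<in> carrier G then f (g \<otimes>\<^bsub>G\<^esub> x) else 0)"
  define U where "U = (\<lambda>f::'g \<Rightarrow> complex. \<lambda>x. if x \<in> carrier G then f (inv\<^bsub>G\<^esub> g \<otimes>\<^bsub>G\<^esub> x) else 0)"
  have TV: "T f \<in> I2.V" if f: "f \<in> I1.V" for f
    unfolding ind_space_def
  proof (intro CollectI conjI allI impI ballI)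
    fix x assume "x \<notin> carrier G" then show "T f x = 0" unfolding T_def by simp
  next
    fix h x assume h: "h \<in> H2" and x: "x \<in> carrier G"
    have hG: "h \<in> carrier G" using H2G[OF h] .
    have "g \<otimes>\<^bsub>G\<^esub> (h \<otimes>\<^bsub>G\<^esub> x) = (g \<otimes>\<^bsub>G\<^esub> h \<otimes>\<^bsub>G\<^esub> inv\<^bsub>G\<^esub> g) \<otimes>\<^bsub>G\<^esub> (g \<otimes>\<^bsub>G\<^esub> x)"
      using g hG x by (simp add: I1.m_assoc)
    then show "T f (h \<otimes>\<^bsub>G\<^esub> x) = \<chi> h * T f x"
      unfolding T_def \<chi>_def using I1.V_eq[OF f cj[OF h], of "g \<otimes>\<^bsub>G\<^esub> x"] g hG x by simp
  qed
  have UV: "U f \<in> I1.V" if f: "f \<in> I2.V" for f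
    unfolding ind_space_def
  proof (intro CollectI conjI allI impI ballI)
    fix x assume "x \<notin> carrier G" then show "U f x = 0" unfolding U_def by simp
  next
    fix h x assume h: "h \<in> H1" and x: "x \<in> carrier G"
    have hG: "h \<in> carrier G" using I1.HG[OF h] .
    have h2: "inv\<^bsub>G\<^esub> g \<otimes>\<^bsub>G\<^esub> h \<otimes>\<^bsub>G\<^esub> g \<in> H2" using H2 h by blast
    have "inv\<^bsub>G\<^esub> g \<otimes>\<^bsub>G\<^esub> (h \<otimes>\<^bsub>G\<^esub> x) = (inv\<^bsub>G\<^esub> g \<otimes>\<^bsub>G\<^esub> h \<otimes>\<^bsub>G\<^esub> g) \<otimes>\<^bsub>G\<^esub> (inv\<^bsub>G\<^esub> g \<otimes>\<^bsub>G\<^esub> x)"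
      using g hG x by (simp add: I1.m_assoc)
    moreover have "\<chi> (inv\<^bsub>G\<^esub> g \<otimes>\<^bsub>G\<^esub> h \<otimes>\<^bsub>G\<^esub> g) = \<Xi> h"
      unfolding \<chi>_def using I1.conj_back[OF g hG] by simp
    ultimately show "U f (h \<otimes>\<^bsub>G\<^esub> x) = \<Xi> h * U f x"
      unfolding U_def using I2.V_eq[OF f h2, of "inv\<^bsub>G\<^esub> g \<otimes>\<^bsub>G\<^esub> x"] g hG x by simp
  qed
  have UT: "U (T f) = f" if f: "f \<in> I1.V" for f
  proof
    fix x show "U (T f) x = f x"
      unfolding U_def T_def using g I1.V_zero_out[OF f, of x] by (simp add: I1.m_assoc[symmetric])
  qed
  have TU: "T (U f) = f" if f: "f \<in> I2.V" for f
  proof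
    fix x show "T (U f) x = f x"
      unfolding U_def T_def using g I2.V_zero_out[OF f, of x] by (simp add: I1.m_assoc[symmetric])
  qed
  have bij: "bij_betw T I1.V I2.V"
    by (rule bij_betw_byWitness[of _ U]) (use UT TU TV UV in auto)
  have lin: "\<forall>u\<in>I1.V. \<forall>v\<in>I1.V. \<forall>a b. T (\<lambda>x. a * u x + b * v x) = (\<lambda>y. a * T u y + b * T v y)"
    unfolding T_def by (auto simp: fun_eq_iff)
  have eqv: "\<forall>k\<in>carrier G. \<forall>v\<in>I1.V. T (I1.\<rho> k v) = I2.\<rho> k (T v)"
    unfolding T_def ind_act_def using g by (auto simp: fun_eq_iff I1.m_assoc)
  have "rep_iso G I1.V I1.\<rho> I2.V I2.\<rho>" unfolding rep_iso_def using bij lin eqv by blast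
  then show "\<exists>\<chi>. lin_char G H2 \<chi> \<and>
            rep_iso G (ind_space G H1 \<Xi>) (ind_act G) (ind_space G H2 \<chi>) (ind_act G)"
    using lc2 by blast
qed

end
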